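(* Fix $n\ge1$. For every $\beta>0$ there exist compact sets $A,B\subset\mathbb{R}^n$ such that $$|A|\,|A+B+B|>\beta|A+B|^2.$$
   Context: $|\cdot|$ is $n$-dimensional Lebesgue measure and $+$ is Minkowski addition. *)

theory Defs
  imports "HOL-Analysis.Analysis" "HOL-Library.Set_Algebras"
begin

end

theory Submission
  imports Defs
begin

lemma mcball:
  fixes c :: "'a::euclidean_space"
  assumes "r \<ge> 0"
  shows "measure lebesgue (cball c r) = r ^ DIM('a) * measure lebesgue (cball (0::'a) 1)"
  using assms by (simp add: content_cball)

theorem lemma4p19:
  fixes \<beta> :: real
  assumes "\<beta> > 0"
  shows "\<exists>A B :: ('n::euclidean_space) set. compact A \<and> compact B \<and>
    measure lebesgue A * measure lebesgue (A + B + B) > \<beta> * (measure lebesgue (A + B))\<^sup>2"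
proof -
  define n where "n = DIM('n)"
  have n1: "n \<ge> 1" unfolding n_def using DIM_positive[where 'a='n] by linarith
  define u where "u = measure lebesgue (cball (0::'n) 1)"
  have u0: "u > 0" unfolding u_def by (simp add: content_cball unit_ball_vol_pos)
  have mc: "measure lebesgue (cball c r) = r ^ n * u" if "r \<ge> 0" for c :: 'n and r
    using mcball[OF that, of c] unfolding n_def u_def by simp
  obtain e :: 'n where e: "e \<in> Basis" using nonempty_Basis by blast
  have ne: "norm e = 1" using e by simp
  define p where "p = (\<lambda>N::nat. real N *\<^sub>R (3 *\<^sub>R e))"
  have padd: "p (a + b) = p a + p b" for a b unfolding p_def by (simp add: scaleR_add_left)
  have pnorm: "norm (p N) = 3 * real N" for N unfolding p_def using ne by simp
  have pdist: "dist (p N) (p M) = 3 * \<bar>real N - real M\<bar>" for N M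
  proof -
    have "p N - p M = (real N - real M) *\<^sub>R (3 *\<^sub>R e)" unfolding p_def by (simp add: scaleR_diff_left)
    then show ?thesis using ne by (simp add: dist_norm abs_if)
  qed
  obtain m :: nat where m: "real m > 9 * 2 ^ n * \<beta>" using reals_Archimedean2 by blast
  have m1: "m \<ge> 1"
  proof -
    have "9 * 2 ^ n * \<beta> > 0" using assms by simp
    then show ?thesis using m by (cases m) auto
  qed
  define Rr :: real where "Rr = 3 * real m ^ 2"
  define K :: nat where "K = 6 ^ n * m ^ (2 * n - 1)"
  define T where "T = {..<m} \<union> (\<lambda>j. m * j) ` {..<m}"
  define B where "B = p ` T"
  define A where "A = cball 0 Rr \<union> (\<Union>k<K. cball (p (k * m ^ 2)) 1)"
  have T_lt: "t < m ^ 2" if "t \<in> T" for t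
  proof -
    have "m \<le> m * m" using m1 by simp
    moreover have "m * j < m * m" if "j < m" for j using that m1 by simp
    ultimately show ?thesis using that unfolding T_def power2_eq_square by (auto intro: less_le_trans)
  qed
  have cardT: "card T \<le> 2 * m"
  proof -
    have "card ({..<m} \<union> (\<lambda>j. m * j) ` {..<m}) \<le> card {..<m} + card ((\<lambda>j. m * j) ` {..<m})"
      by (rule card_Un_le)
    also have "\<dots> \<le> m + m" using card_image_le[of "{..<m}" "\<lambda>j. m * j"] by simp
    finally show ?thesis by (simp add: T_def)
  qed
  have finT: "finite T" unfolding T_def by simp
  have cA: "compact A" unfolding A_def by (intro compact_Un compact_UN) auto
  have cB: "compact B" unfolding B_def using finT by (intro finite_imp_compact) auto
  have cplus: "compact (X + Y)" if "compact X" "compact Y" for X Y :: "'n set"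
  proof -
    have "X + Y = {x + y | x y. x \<in> X \<and> y \<in> Y}" by (auto simp: set_plus_def)
    then show ?thesis using compact_sums[OF that] by simp
  qed
  have cAB: "compact (A + B)" using cplus cA cB by blast
  have cABB: "compact (A + B + B)" using cplus cAB cB by blast
  have mA: "measure lebesgue A \<ge> Rr ^ n * u"
  proof -
    have "measure lebesgue (cball (0::'n) Rr) \<le> measure lebesgue A"
      by (rule measure_mono_fmeasurable) (auto simp: A_def[symmetric] intro: lmeasurable_compact cA, auto simp: A_def)
    then show ?thesis using mc[of Rr 0] unfolding Rr_def by simp
  qed
  define F where "F = (\<lambda>kt::nat\<times>nat. cball (p (fst kt*m^2 + snd kt)) (1::real))"
  have cF: "compact (F kt)" for kt unfolding F_def by simp
  define C where "C = cball 0 (2*Rr) \<union> (\<Union>kt\<in>{..<K}\<times>T. F kt)"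
  have sub1: "A + B \<subseteq> C"
  proof
    fix z assume "z \<in> A + B"
    then obtain a b where z: "z = a + b" "a \<in> A" "b \<in> B" by (auto elim: set_plus_elim)
    then obtain t where t: "t \<in> T" "b = p t" unfolding B_def by auto
    have tl: "real t \<le> real m ^ 2" using T_lt[OF t(1)] by (metis less_imp_le of_nat_le_iff of_nat_power)
    show "z \<in> C"
    proof (cases "a \<in> cball 0 Rr")
      case True
      have "norm z \<le> norm a + norm b" using z norm_triangle_ineq by blast
      also have "\<dots> \<le> Rr + 3 * real t" using True t pnorm by simp
      also have "\<dots> \<le> 2 * Rr" using tl unfolding Rr_def by simp
      finally show ?thesis unfolding C_def by simp
    next
      case False
      then obtain k where k: "k < K" "a \<in> cball (p (k*m^2)) 1" using z(2) unfolding A_def by auto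
      have "dist (p (k*m^2 + t)) z = dist (p (k*m^2)) a" using z t padd by (simp add: dist_norm)
      then have "z \<in> cball (p (k*m^2 + t)) 1" using k by simp
      then have "z \<in> F (k,t)" unfolding F_def by simp
      then show ?thesis unfolding C_def using k t by blast
    qed
  qed
  have mAB: "measure lebesgue (A + B) \<le> (2*Rr)^n*u + real K * (2*m) * u"
  proof -
    have "measure lebesgue (A + B) \<le> measure lebesgue C"
      by (rule measure_mono_fmeasurable[OF sub1]) (auto intro: fmeasurableD[OF lmeasurable_compact[OF cAB]], auto simp: C_def finT cF intro!: lmeasurable_compact cAB compact_Un compact_UN)
    also have "\<dots> \<le> measure lebesgue (cball (0::'n) (2*Rr)) + measure lebesgue (\<Union>kt\<in>{..<K}\<times>T. F kt)"
      unfolding C_def by (rule measure_Un_le) (auto simp: finT F_def intro!: lmeasurable_compact sets.finite_UN)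
    also have "measure lebesgue (\<Union>kt\<in>{..<K}\<times>T. F kt) \<le> (\<Sum>kt\<in>{..<K}\<times>T. measure lebesgue (F kt))"
      by (rule measure_UNION_le) (auto simp: finT F_def)
    also have "\<dots> = real K * real (card T) * u" using mc[of 1] by (simp add: F_def card_cartesian_product)
    also have "\<dots> \<le> real K * (2*m) * u"
    proof -
      have "real (card T) \<le> 2 * real m" using cardT by linarith
      then show ?thesis using u0 by (intro mult_right_mono mult_left_mono) auto
    qed
    finally show ?thesis using mc[of "2*Rr" 0] unfolding Rr_def by simp
  qed
  have sub2: "(\<Union>N<K*m^2. cball (p N) 1) \<subseteq> A + B + B"
  proof
    fix z assume "z \<in> (\<Union>N<K*m^2. cball (p N) 1)"
    then obtain N where N: "N < K*m^2" "z \<in> cball (p N) 1" by auto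
    define k where "k = N div m^2"
    define r where "r = N mod m^2"
    define i where "i = r mod m"
    define j where "j = r div m"
    have m2: "m^2 > 0" using m1 by simp
    have kK: "k < K" unfolding k_def using N(1) m2
      by (simp add: less_mult_imp_div_less)
    have rl: "r < m * m" unfolding r_def using m2 by (simp add: power2_eq_square)
    have im: "i < m" unfolding i_def using m1 by simp
    have jm: "j < m" unfolding j_def using rl m1 by (simp add: div_less_iff_less_mult)
    have Neq: "N = k*m^2 + i + m*j" unfolding k_def i_def j_def r_def
      by (metis add.commute mod_mult_div_eq div_mult_mod_eq group_cancel.add1)
    have iT: "i \<in> T" using im unfolding T_def by simp
    have jT: "m*j \<in> T" using jm unfolding T_def by simp
    define a where "a = z - p i - p (m*j)"
    have "dist (p (k*m^2)) a = dist (p N) z" unfolding a_def Neq padd by (simp add: dist_norm algebra_simps)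
    then have "a \<in> cball (p (k*m^2)) 1" using N(2) by simp
    then have "a \<in> A" using kK unfolding A_def by blast
    moreover have "p i \<in> B" "p (m*j) \<in> B" unfolding B_def using iT jT by auto
    ultimately have "a + p i + p (m*j) \<in> A + B + B" by (intro set_plus_intro)
    then show "z \<in> A + B + B" unfolding a_def by simp
  qed
  have mABB: "measure lebesgue (A + B + B) \<ge> real (K*m^2) * u"
  proof -
    have disj: "disjoint_family_on (\<lambda>N. cball (p N) 1) {..<K*m^2}"
      unfolding disjoint_family_on_def
    proof (intro ballI impI)
      fix N M :: nat assume "N \<noteq> M"
      then have "\<bar>real N - real M\<bar> \<ge> 1" by linarith
      then have "dist (p N) (p M) > 2" using pdist by simp
      then show "cball (p N) 1 \<inter> cball (p M) 1 = {}"
      proof (safe)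
        fix x assume "x \<in> cball (p N) 1" "x \<in> cball (p M) 1"
        then have "dist (p N) x \<le> 1" "dist x (p M) \<le> 1" by (auto simp: dist_commute)
        then have "dist (p N) (p M) \<le> 2" using dist_triangle[of "p N" "p M" x] by linarith
        then show "x \<in> {}" using \<open>dist (p N) (p M) > 2\<close> by simp
      qed
    qed
    have "measure lebesgue (\<Union>N<K*m^2. cball (p N) 1) = (\<Sum>N<K*m^2. measure lebesgue (cball (p N) (1::real)))"
      by (rule measure_finite_Union) (auto simp: disj emeasure_eq_measure2 lmeasurable_cball)
    also have "\<dots> = real (K*m^2) * u" using mc[of 1] by simp
    finally have eq: "measure lebesgue (\<Union>N<K*m^2. cball (p N) 1) = real (K*m^2) * u" .
    have "measure lebesgue (\<Union>N<K*m^2. cball (p N) 1) \<le> measure lebesgue (A + B + B)"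
      by (rule measure_mono_fmeasurable[OF sub2]) (auto intro!: lmeasurable_compact cABB)
    then show ?thesis using eq by simp
  qed
  define W :: real where "W = (real m ^ 2) ^ n"
  have W0: "W > 0" unfolding W_def using m1 by simp
  have Km: "real K * real m = 6 ^ n * W"
  proof -
    have "m ^ (2*n-1) * m = m ^ (2*n)" using n1 by (metis Suc_diff_1 mult_pos_pos pos2 power_Suc2 less_le_trans zero_less_one)
    then have "real (m ^ (2*n-1)) * real m = real m ^ (2*n)" by (metis of_nat_mult of_nat_power)
    then show ?thesis unfolding K_def W_def by (simp add: power_mult)
  qed
  have e1: "Rr ^ n = 3 ^ n * W" unfolding Rr_def W_def by (simp add: power_mult_distrib)
  have e2: "(2*Rr) ^ n = 6 ^ n * W" unfolding Rr_def W_def by (simp add: power_mult_distrib)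
  have AB0: "measure lebesgue (A + B) \<ge> 0" by simp
  have ABle: "measure lebesgue (A + B) \<le> 3 * 6 ^ n * W * u"
  proof -
    have "real K * real (2 * m) * u = 2 * (real K * real m) * u" by simp
    also have "\<dots> = 2 * (6 ^ n * W) * u" by (simp only: Km)
    finally have h: "real K * real (2 * m) * u = 2 * (6 ^ n * W) * u" .
    have h2: "(2*Rr)^n*u = 6^n*W*u" by (simp only: e2)
    show ?thesis using mAB h h2 by linarith
  qed
  have ABBge: "measure lebesgue (A + B + B) \<ge> 6 ^ n * W * real m * u"
  proof -
    have "real (K*m^2) * u = (real K * real m) * real m * u" by (simp add: power2_eq_square)
    also have "\<dots> = 6 ^ n * W * real m * u" by (simp only: Km)
    finally show ?thesis using mABB by linarith
  qed
  have Age: "measure lebesgue A \<ge> 3 ^ n * W * u" using mA e1 by simp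
  have "\<beta> * (measure lebesgue (A + B))\<^sup>2 \<le> \<beta> * (3 * 6 ^ n * W * u)^2"
    using ABle AB0 assms by (intro mult_left_mono power_mono) auto
  also have "\<dots> = (9 * 2 ^ n * \<beta>) * (3 ^ n * 6 ^ n * W^2 * u^2)"
  proof -
    have "(6::real)^n * 6^n = 2^n * 3^n * 6^n" by (simp add: power_mult_distrib[symmetric])
    then show ?thesis by (simp add: power2_eq_square algebra_simps)
  qed
  also have "\<dots> < real m * (3 ^ n * 6 ^ n * W^2 * u^2)"
    using m W0 u0 by (intro mult_strict_right_mono) auto
  also have "\<dots> = (3 ^ n * W * u) * (6 ^ n * W * real m * u)" by (simp add: power2_eq_square algebra_simps)
  also have "\<dots> \<le> measure lebesgue A * measure lebesgue (A + B + B)"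
    using Age ABBge W0 u0 by (intro mult_mono) auto
  finally show ?thesis using cA cB by blast
qed

end
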